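(* There exists a pair of SBP operators $D_+, D_-$ (in the sense defined in the context) which is nullspace consistent but does not have the eigenvalue property. That is, there exist $n$, an interval $[a,b]$, and data $D_+, D_-, H, S, \mathbf{p}_0, \mathbf{p}_n, \mathbf{x}$ satisfying conditions (A)–(E) for some order $q\ge 1$, such that $\ker D_+ = \operatorname{span}\{\mathbf{1}\}$, but the matrix $\tilde D_+ = D_+ + H^{-1}\mathbf{p}_0\mathbf{p}_0^\top$ has an eigenvalue with non-positive real part.
   Context: Let $[a,b]$ be an interval with $b>a$ and $n\ge 1$. For $\mathbf{x}\in\mathbb{R}^{n+1}$, $\mathbf{x}^j$ denotes elementwise exponentiation, with $\mathbf{x}^0=\mathbf{1}=(1,\dots,1)^\top$. Matrices $D_+, D_-\in\mathbb{R}^{(n+1)\times(n+1)}$ form a pair of SBP (summation-by-parts) operators of order $q\ge 1$ on $[a,b]$ if there exist matrices $H,S\in\mathbb{R}^{(n+1)\times(n+1)}$ and vectors $\mathbf{p}_0,\mathbf{p}_n,\mathbf{x}\in\mathbb{R}^{n+1}$ such that: (A) $D_\pm \mathbf{x}^j = j\mathbf{x}^{j-1}$, $\mathbf{p}_0^\top\mathbf{x}^j = a^j$, $\mathbf{p}_n^\top \mathbf{x}^j = b^j$ for $j=0,\dots,q$ (with $0\cdot\mathbf{x}^{-1}:=\mathbf{0}$); (B) $H=H^\top$ is positive definite; (C) $HD_+ + D_+^\top H = -\mathbf{p}_0\mathbf{p}_0^\top + \mathbf{p}_n\mathbf{p}_n^\top + S$ with $S=S^\top$ positive semidefinite; (D)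 $HD_+ + D_-^\top H = -\mathbf{p}_0\mathbf{p}_0^\top + \mathbf{p}_n\mathbf{p}_n^\top$; (E) $\mathbf{x}=(x_0,\dots,x_n)^\top$ with $x_i\ne x_j$ for $i\ne j$. The SBP operator is called nullspace consistent if $\ker D_+=\operatorname{span}\{\mathbf{1}\}$. Set $\tilde D_+ := D_+ + H^{-1}\mathbf{p}_0\mathbf{p}_0^\top$. The SBP operator has the eigenvalue property if every eigenvalue of $\tilde D_+$ has strictly positive real part. *)

theory Defs
  imports "Jordan_Normal_Form.Matrix" "Jordan_Normal_Form.Char_Poly" "Jordan_Normal_Form.Matrix_Kernel"
begin

definition vpow :: "real vec \<Rightarrow> nat \<Rightarrow> real vec" where
  "vpow x j = vec (dim_vec x) (\<lambda>i. (x $ i) ^ j)"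

definition outer :: "real vec \<Rightarrow> real vec \<Rightarrow> real mat" where
  "outer p r = mat (dim_vec p) (dim_vec r) (\<lambda>(i,j). p $ i * r $ j)"

definition pos_def_mat :: "real mat \<Rightarrow> bool" where
  "pos_def_mat A \<longleftrightarrow> A \<in> carrier_mat (dim_row A) (dim_row A) \<and> A\<^sup>T = A \<and>
     (\<forall>v \<in> carrier_vec (dim_row A). v \<noteq> 0\<^sub>v (dim_row A) \<longrightarrow> v \<bullet> (A *\<^sub>v v) > 0)"

definition pos_semidef_mat :: "real mat \<Rightarrow> bool" where
  "pos_semidef_mat A \<longleftrightarrow> A \<in> carrier_mat (dim_row A) (dim_row A) \<and> A\<^sup>T = A \<and>
     (\<forall>v \<in> carrier_vec (dim_row A). v \<bullet> (A *\<^sub>v v) \<ge> 0)"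

definition SBP_pair ::
  "nat \<Rightarrow> nat \<Rightarrow> real \<Rightarrow> real \<Rightarrow> real mat \<Rightarrow> real mat \<Rightarrow> real mat \<Rightarrow> real mat
     \<Rightarrow> real vec \<Rightarrow> real vec \<Rightarrow> real vec \<Rightarrow> bool" where
  "SBP_pair n q a b Dp Dm H S p0 pn x \<longleftrightarrow>
     (let N = n + 1 in
      Dp \<in> carrier_mat N N \<and> Dm \<in> carrier_mat N N \<and> H \<in> carrier_mat N N \<and> S \<in> carrier_mat N N \<and>
      p0 \<in> carrier_vec N \<and> pn \<in> carrier_vec N \<and> x \<in> carrier_vec N \<and>
      \<comment> \<open>(A)\<close>
      (\<forall>j \<le> q. Dp *\<^sub>v vpow x j = (if j = 0 then 0\<^sub>v N else of_nat j \<cdot>\<^sub>v vpow x (j - 1)) \<and>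
                Dm *\<^sub>v vpow x j = (if j = 0 then 0\<^sub>v N else of_nat j \<cdot>\<^sub>v vpow x (j - 1)) \<and>
                p0 \<bullet> vpow x j = a ^ j \<and> pn \<bullet> vpow x j = b ^ j) \<and>
      \<comment> \<open>(B)\<close>
      pos_def_mat H \<and>
      \<comment> \<open>(C)\<close>
      H * Dp + Dp\<^sup>T * H = - outer p0 p0 + outer pn pn + S \<and> pos_semidef_mat S \<and>
      \<comment> \<open>(D)\<close>
      H * Dp + Dm\<^sup>T * H = - outer p0 p0 + outer pn pn \<and>
      \<comment> \<open>(E)\<close>
      (\<forall>i < N. \<forall>j < N. i \<noteq> j \<longrightarrow> x $ i \<noteq> x $ j))"

definition nullspace_consistent :: "real mat \<Rightarrow> bool" where
  "nullspace_consistent Dp \<longleftrightarrow>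
     mat_kernel Dp = {c \<cdot>\<^sub>v vec (dim_col Dp) (\<lambda>_. 1) | c. True}"

definition eigenvalue_property :: "real mat \<Rightarrow> real mat \<Rightarrow> real vec \<Rightarrow> bool" where
  "eigenvalue_property Dp H p0 \<longleftrightarrow>
     (\<forall>Hinv. inverts_mat H Hinv \<and> inverts_mat Hinv H \<longrightarrow>
        (\<forall>ev. eigenvalue (map_mat complex_of_real (Dp + Hinv * outer p0 p0)) ev \<longrightarrow> Re ev > 0))"

end

theory Submission imports Defs begin

lemma sum4: "(\<Sum>i\<in>{0..<4::nat}. f i) = f 0 + f 1 + f 2 + f 3"
  by (simp add: numeral_eq_Suc atLeast0_lessThan_Suc add.commute add.left_commute)

lemma less4: "i < (4::nat) \<Longrightarrow> i = 0 \<or> i = 1 \<or> i = 2 \<or> i = 3" by auto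

definition "Hm = mat 4 4 (\<lambda>(i,j). [[7/2,-1,-1,0],[-1,2,-1,0],[-1,-1,5,-3],[0,0,-3,9/2::real]] ! i ! j)"
definition "Dpm = mat 4 4 (\<lambda>(i,j). [[-1/3,0,0,1/3],[-2/3,-1/3,5/3,-2/3],[0,-2/3,1/3,1/3],[-1/3,0,0,1/3::real]] ! i ! j)"
definition "Hinv = mat 4 4 (\<lambda>(i,j). [[10/21,8/21,6/21,4/21],[8/21,19/21,9/21,6/21],[6/21,9/21,12/21,8/21],[4/21,6/21,8/21,10/21::real]] ! i ! j)"
definition "p0 = vec 4 (\<lambda>i. [1,0,0,0::real] ! i)"
definition "pn = vec 4 (\<lambda>i. [0,0,0,1::real] ! i)"
definition "xv = vec 4 (\<lambda>i. [0,1,2,3::real] ! i)"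

lemma C: "Hm * Dpm + Dpm\<^sup>T * Hm = - outer p0 p0 + outer pn pn + 0\<^sub>m 4 4"
  by (rule eq_matI) (auto simp: Hm_def Dpm_def p0_def pn_def outer_def scalar_prod_def sum4 row_def col_def dest!: less4)

lemma D: "Hm * Dpm + Dpm\<^sup>T * Hm = - outer p0 p0 + outer pn pn"
  by (rule eq_matI) (auto simp: Hm_def Dpm_def p0_def pn_def outer_def scalar_prod_def sum4 row_def col_def dest!: less4)

lemma inv1: "inverts_mat Hm Hinv"
  unfolding inverts_mat_def
  by (rule eq_matI) (auto simp: Hm_def Hinv_def scalar_prod_def sum4 row_def col_def dest!: less4)

lemma inv2: "inverts_mat Hinv Hm"
  unfolding inverts_mat_def
  by (rule eq_matI) (auto simp: Hm_def Hinv_def scalar_prod_def sum4 row_def col_def dest!: less4)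

lemma vp0: "vpow xv 0 = vec 4 (\<lambda>_. 1)"
  by (rule eq_vecI) (auto simp: vpow_def xv_def)
lemma vp1: "vpow xv 1 = xv"
  by (rule eq_vecI) (auto simp: vpow_def xv_def)

lemma A: "\<forall>j \<le> 1. Dpm *\<^sub>v vpow xv j = (if j = 0 then 0\<^sub>v 4 else of_nat j \<cdot>\<^sub>v vpow xv (j - 1)) \<and>
                Dpm *\<^sub>v vpow xv j = (if j = 0 then 0\<^sub>v 4 else of_nat j \<cdot>\<^sub>v vpow xv (j - 1)) \<and>
                p0 \<bullet> vpow xv j = 0 ^ j \<and> pn \<bullet> vpow xv j = 3 ^ j"
proof (intro allI impI)
  fix j :: nat assume "j \<le> 1"
  then consider "j = 0" | "j = 1" by linarith
  then show "Dpm *\<^sub>v vpow xv j = (if j = 0 then 0\<^sub>v 4 else of_nat j \<cdot>\<^sub>v vpow xv (j - 1)) \<and>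
                Dpm *\<^sub>v vpow xv j = (if j = 0 then 0\<^sub>v 4 else of_nat j \<cdot>\<^sub>v vpow xv (j - 1)) \<and>
                p0 \<bullet> vpow xv j = 0 ^ j \<and> pn \<bullet> vpow xv j = (3::real) ^ j"
  proof cases
    case 1
    have "Dpm *\<^sub>v vpow xv 0 = 0\<^sub>v 4" unfolding vp0
      by (rule eq_vecI) (auto simp: Dpm_def scalar_prod_def sum4 row_def dest!: less4)
    moreover have "p0 \<bullet> vpow xv 0 = 1" "pn \<bullet> vpow xv 0 = 1" unfolding vp0
      by (auto simp: p0_def pn_def scalar_prod_def sum4)
    ultimately show ?thesis using 1 by simp
  next
    case 2
    have "Dpm *\<^sub>v vpow xv 1 = 1 \<cdot>\<^sub>v vpow xv 0" unfolding vp0 vp1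
      by (rule eq_vecI) (auto simp: Dpm_def xv_def scalar_prod_def sum4 row_def dest!: less4)
    moreover have "p0 \<bullet> vpow xv 1 = 0" "pn \<bullet> vpow xv 1 = 3" unfolding vp1
      by (auto simp: p0_def pn_def xv_def scalar_prod_def sum4)
    ultimately show ?thesis using 2 by simp
  qed
qed

lemma quad_id: "(a::real)*(7/2*a - b - c) + b*(-a + 2*b - c) + c*(-a - b + 5*c - 3*d') + d'*(-3*c + 9/2*d')
   = 9/2*(d'-2*c/3)^2 + 3*(c-(a+b)/3)^2 + 5/3*(b-4*a/5)^2 + 21/10*a^2"
  by (simp add: power2_eq_square field_simps)

lemma posdef: "pos_def_mat Hm"
  unfolding pos_def_mat_def
proof (intro conjI ballI impI)
  show "Hm \<in> carrier_mat (dim_row Hm) (dim_row Hm)" by (simp add: Hm_def)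
  show "Hm\<^sup>T = Hm"
    by (rule eq_matI) (auto simp: Hm_def dest!: less4)
  fix v :: "real vec" assume v: "v \<in> carrier_vec (dim_row Hm)" "v \<noteq> 0\<^sub>v (dim_row Hm)"
  have d: "dim_vec v = 4" using v by (simp add: Hm_def)
  define a b c d' where "a = v$0" "b = v$1" "c = v$2" "d' = v$3"
  have q0: "v \<bullet> (Hm *\<^sub>v v) = a*(7/2*a - b - c) + b*(-a + 2*b - c) + c*(-a - b + 5*c - 3*d') + d'*(-3*c + 9/2*d')"
    by (simp add: d Hm_def scalar_prod_def sum4 row_def a_b_c_d'_def)
  have q: "v \<bullet> (Hm *\<^sub>v v) = 9/2*(d'-2*c/3)^2 + 3*(c-(a+b)/3)^2 + 5/3*(b-4*a/5)^2 + 21/10*a^2"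
    using q0 quad_id by simp
  have nz: "a \<noteq> 0 \<or> b \<noteq> 0 \<or> c \<noteq> 0 \<or> d' \<noteq> 0"
  proof (rule ccontr)
    assume "\<not> ?thesis"
    hence "v = 0\<^sub>v 4" by (intro eq_vecI) (auto simp: d a_b_c_d'_def dest!: less4)
    thus False using v by (simp add: Hm_def)
  qed
  show "v \<bullet> (Hm *\<^sub>v v) > 0"
  proof (rule ccontr)
    assume "\<not> ?thesis"
    hence le: "9/2*(d'-2*c/3)^2 + 3*(c-(a+b)/3)^2 + 5/3*(b-4*a/5)^2 + 21/10*a^2 \<le> 0" using q by simp
    have s: "(d'-2*c/3)^2 \<ge> 0" "(c-(a+b)/3)^2 \<ge> 0" "(b-4*a/5)^2 \<ge> 0" "a^2 \<ge> 0" by simp_all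
    have "(d'-2*c/3)^2 = 0" "(c-(a+b)/3)^2 = 0" "(b-4*a/5)^2 = 0" "a^2 = 0"
      using le s by linarith+
    hence "d'-2*c/3 = 0" "c-(a+b)/3 = 0" "b-4*a/5 = 0" "a = 0" by simp_all
    thus False using nz by auto
  qed
qed

lemma possemi: "pos_semidef_mat (0\<^sub>m 4 4 :: real mat)"
  unfolding pos_semidef_mat_def by (auto simp: mult_mat_vec_def scalar_prod_def)

lemma distinct: "\<forall>i < 4. \<forall>j < 4. i \<noteq> j \<longrightarrow> xv $ i \<noteq> xv $ j"
  by (auto simp: xv_def dest!: less4)

lemma kernel: "nullspace_consistent Dpm"
  unfolding nullspace_consistent_def
proof (intro equalityI subsetI)
  fix v :: "real vec" assume "v \<in> mat_kernel Dpm"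
  hence v: "dim_vec v = 4" "Dpm *\<^sub>v v = 0\<^sub>v 4" by (auto simp: mat_kernel_def Dpm_def)
  have e: "(Dpm *\<^sub>v v) $ i = 0" if "i < 4" for i using v that by simp
  have r0: "(Dpm *\<^sub>v v)$0 = -1/3*v$0 + 1/3*v$3" by (simp add: Dpm_def scalar_prod_def sum4 row_def v)
  have r1: "(Dpm *\<^sub>v v)$1 = -2/3*v$0 - 1/3*v$1 + 5/3*v$2 - 2/3*v$3" by (simp add: Dpm_def scalar_prod_def sum4 row_def v)
  have r2: "(Dpm *\<^sub>v v)$2 = -2/3*v$1 + 1/3*v$2 + 1/3*v$3" by (simp add: Dpm_def scalar_prod_def sum4 row_def v)
  have "v$1 = v$0" "v$2 = v$0" "v$3 = v$0" using e[of 0] e[of 1] e[of 2] r0 r1 r2 by linarith+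
  hence "v = v$0 \<cdot>\<^sub>v vec (dim_col Dpm) (\<lambda>_. 1)"
    by (intro eq_vecI) (auto simp: Dpm_def v dest!: less4)
  thus "v \<in> {c \<cdot>\<^sub>v vec (dim_col Dpm) (\<lambda>_. 1) | c. True}" by blast
next
  fix v :: "real vec" assume "v \<in> {c \<cdot>\<^sub>v vec (dim_col Dpm) (\<lambda>_. 1) | c. True}"
  then obtain c where c: "v = c \<cdot>\<^sub>v vec 4 (\<lambda>_. 1)" by (auto simp: Dpm_def)
  have "Dpm *\<^sub>v v = 0\<^sub>v 4" unfolding c
    by (rule eq_vecI) (auto simp: Dpm_def scalar_prod_def sum4 row_def dest!: less4)
  thus "v \<in> mat_kernel Dpm" unfolding mat_kernel_def by (auto simp: Dpm_def c)
qed

definition "ev = vec 4 (\<lambda>i. [0,5,1+3*\<i>,0::complex] ! i)"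

lemma eig: "eigenvalue (map_mat complex_of_real (Dpm + Hinv * outer p0 p0)) \<i>"
  unfolding eigenvalue_def eigenvector_def
proof (intro exI conjI)
  show "ev \<in> carrier_vec (dim_row (map_mat complex_of_real (Dpm + Hinv * outer p0 p0)))"
    by (simp add: ev_def Dpm_def Hinv_def)
  show "ev \<noteq> 0\<^sub>v (dim_row (map_mat complex_of_real (Dpm + Hinv * outer p0 p0)))"
  proof
    assume H: "ev = 0\<^sub>v (dim_row (map_mat complex_of_real (Dpm + Hinv * outer p0 p0)))"
    have "ev $ 1 = 5" by (simp add: ev_def)
    moreover have "ev $ 1 = 0" unfolding H by (simp add: Dpm_def Hinv_def)
    ultimately show False by simp
  qed
  show "map_mat complex_of_real (Dpm + Hinv * outer p0 p0) *\<^sub>v ev = \<i> \<cdot>\<^sub>v ev"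
    by (rule eq_vecI) (auto simp: Dpm_def Hinv_def outer_def p0_def ev_def scalar_prod_def sum4 row_def col_def complex_eq_iff dest!: less4)
qed

theorem theorem1:
  shows "\<exists>(n::nat) (q::nat) (a::real) (b::real) Dp Dm H S p0 pn x.
           n \<ge> 1 \<and> q \<ge> 1 \<and> b > a \<and>
           SBP_pair n q a b Dp Dm H S p0 pn x \<and>
           nullspace_consistent Dp \<and>
           \<not> eigenvalue_property Dp H p0"
proof -
  have "SBP_pair 3 1 0 3 Dpm Dpm Hm (0\<^sub>m 4 4) p0 pn xv"
    unfolding SBP_pair_def Let_def
    using A C D posdef possemi distinct
    by (simp add: Dpm_def Hm_def p0_def pn_def xv_def del: vpow_def)
  moreover have "\<not> eigenvalue_property Dpm Hm p0"
    unfolding eigenvalue_property_def using inv1 inv2 eig by force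
  ultimately show ?thesis using kernel
    apply (rule_tac x=3 in exI)
    apply (rule_tac x=1 in exI)
    apply (rule_tac x=0 in exI)
    apply (rule_tac x=3 in exI)
    apply (rule_tac x=Dpm in exI)
    apply (rule_tac x=Dpm in exI)
    apply (rule_tac x=Hm in exI)
    apply (rule_tac x="0\<^sub>m 4 4" in exI)
    apply (rule_tac x=p0 in exI)
    apply (rule_tac x=pn in exI)
    apply (rule_tac x=xv in exI)
    by simp
qed

end
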